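(* Let $H=\{0,1,2,3,4\}$ and $\mathcal R=\{(0,0,0),(0,1,1),(1,0,2),(1,0,3),(1,1,4)\}\subseteq H^3$, and let $\mathcal H=(H;\mathcal R,C_0,C_1,C_2,C_3,C_4)$ where $C_a=\{a\}$. Then $\mathcal H$ is $2$-rigid and has a Mal'tsev polymorphism (hence is strongly rectangular), but $\mathcal H$ is not strongly $2$-rectangular: the relation defined by $\exists^{\equiv2}z\,\mathcal R(x,y,z)$ equals $\{(0,0),(0,1),(1,1)\}$, which is not rectangular.
   Context: $\exists^{\equiv2}z\,\Psi(z)$ holds iff the number of $z$ satisfying $\Psi$ is odd. A Mal'tsev polymorphism is $f:H^3\to H$ with $f(a,a,b)=f(b,a,a)=b$ for all $a,b$, preserving every relation coordinatewise. Strongly rectangular: every pp-definable relation (defined from the relations using conjunction, equality and ordinary existential quantification) of arity $\ge2$ is rectangular; strongly $2$-rectangular: every relation of arity $\ge 2$ definable with $2$-modular quantifiers $\exists^{\equiv2}$ in place of $\exists$ is rectangular. A binary relation is rectangular if $(a,c),(a,d),(b,c)\in\mathcal R$ implies $(b,d)\in\mathcal R$; higher-arity rectangularity means this holds for every split of the coordinates into two nonempty parts. $2$-rigid: no automorphism of order 2. *)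

theory Defs
  imports Main
begin

text \<open>A finite relational structure is given by a domain D and a list of
relations; each relation is a set of tuples, tuples being lists.\<close>

definition Hdom :: "nat set" where "Hdom = {0,1,2,3,4}"

definition Rrel :: "nat list set" where
  "Rrel = {[0,0,0],[0,1,1],[1,0,2],[1,0,3],[1,1,4]}"

definition Crel :: "nat \<Rightarrow> nat list set" where "Crel a = {[a]}"

text \<open>The structure (H; R, C0, C1, C2, C3, C4): relation symbol 0 is R,
relation symbol (a+1) is C_a.\<close>
definition Hrels :: "nat list set list" where
  "Hrels = [Rrel, Crel 0, Crel 1, Crel 2, Crel 3, Crel 4]"

definition preserves3 :: "nat set \<Rightarrow> (nat \<Rightarrow> nat \<Rightarrow> nat \<Rightarrow> nat) \<Rightarrow> nat list set \<Rightarrow> bool" where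
  "preserves3 D f S \<longleftrightarrow> (\<forall>t1\<in>S. \<forall>t2\<in>S. \<forall>t3\<in>S.
      length t1 = length t2 \<and> length t2 = length t3 \<longrightarrow>
      map (\<lambda>i. f (t1!i) (t2!i) (t3!i)) [0..<length t1] \<in> S)"

definition maltsev_polymorphism :: "nat set \<Rightarrow> nat list set list \<Rightarrow> (nat \<Rightarrow> nat \<Rightarrow> nat \<Rightarrow> nat) \<Rightarrow> bool" where
  "maltsev_polymorphism D rels f \<longleftrightarrow>
     (\<forall>a\<in>D. \<forall>b\<in>D. \<forall>c\<in>D. f a b c \<in> D) \<and>
     (\<forall>a\<in>D. \<forall>b\<in>D. f a a b = b \<and> f b a a = b) \<and>
     (\<forall>S\<in>set rels. preserves3 D f S)"

definition automorphism :: "nat set \<Rightarrow> nat list set list \<Rightarrow> (nat \<Rightarrow> nat) \<Rightarrow> bool" where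
  "automorphism D rels g \<longleftrightarrow> bij_betw g D D \<and>
     (\<forall>S\<in>set rels. \<forall>t\<in>lists D. t \<in> S \<longleftrightarrow> map g t \<in> S)"

definition two_rigid :: "nat set \<Rightarrow> nat list set list \<Rightarrow> bool" where
  "two_rigid D rels \<longleftrightarrow> \<not> (\<exists>g. automorphism D rels g \<and>
      (\<forall>x\<in>D. g (g x) = x) \<and> (\<exists>x\<in>D. g x \<noteq> x))"

datatype fm = Atom nat "nat list" | Eq nat nat | Conj fm fm | Ex nat fm | ExPar nat fm

fun sat :: "nat set \<Rightarrow> nat list set list \<Rightarrow> (nat \<Rightarrow> nat) \<Rightarrow> fm \<Rightarrow> bool" where
  "sat D rels s (Atom k vs) = (k < length rels \<and> map s vs \<in> rels ! k)"
| "sat D rels s (Eq x y) = (s x = s y)"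
| "sat D rels s (Conj \<phi> \<psi>) = (sat D rels s \<phi> \<and> sat D rels s \<psi>)"
| "sat D rels s (Ex x \<phi>) = (\<exists>a\<in>D. sat D rels (s(x := a)) \<phi>)"
| "sat D rels s (ExPar x \<phi>) = odd (card {a\<in>D. sat D rels (s(x := a)) \<phi>})"

fun fv :: "fm \<Rightarrow> nat set" where
  "fv (Atom k vs) = set vs"
| "fv (Eq x y) = {x, y}"
| "fv (Conj \<phi> \<psi>) = fv \<phi> \<union> fv \<psi>"
| "fv (Ex x \<phi>) = fv \<phi> - {x}"
| "fv (ExPar x \<phi>) = fv \<phi> - {x}"

fun pp :: "fm \<Rightarrow> bool" where
  "pp (Atom k vs) = True" | "pp (Eq x y) = True" | "pp (Conj \<phi> \<psi>) = (pp \<phi> \<and> pp \<psi>)"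
| "pp (Ex x \<phi>) = pp \<phi>" | "pp (ExPar x \<phi>) = False"

fun mod2fm :: "fm \<Rightarrow> bool" where
  "mod2fm (Atom k vs) = True" | "mod2fm (Eq x y) = True"
| "mod2fm (Conj \<phi> \<psi>) = (mod2fm \<phi> \<and> mod2fm \<psi>)"
| "mod2fm (Ex x \<phi>) = False" | "mod2fm (ExPar x \<phi>) = mod2fm \<phi>"

text \<open>Relation defined by \<phi> with free variables listed (distinctly) in vs.\<close>
definition defrel :: "nat set \<Rightarrow> nat list set list \<Rightarrow> fm \<Rightarrow> nat list \<Rightarrow> nat list set" where
  "defrel D rels \<phi> vs = {map s vs | s. (\<forall>v. s v \<in> D) \<and> sat D rels s \<phi>}"

definition mix :: "nat set \<Rightarrow> nat \<Rightarrow> nat list \<Rightarrow> nat list \<Rightarrow> nat list" where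
  "mix I n u v = map (\<lambda>i. if i \<in> I then u ! i else v ! i) [0..<n]"

definition rectangular :: "nat \<Rightarrow> nat list set \<Rightarrow> bool" where
  "rectangular n S \<longleftrightarrow> (\<forall>I. I \<subseteq> {..<n} \<and> I \<noteq> {} \<and> I \<noteq> {..<n} \<longrightarrow>
     (\<forall>a b c d. length a = n \<and> length b = n \<and> length c = n \<and> length d = n \<and>
        mix I n a c \<in> S \<and> mix I n a d \<in> S \<and> mix I n b c \<in> S \<longrightarrow> mix I n b d \<in> S))"

definition strongly_rectangular :: "nat set \<Rightarrow> nat list set list \<Rightarrow> bool" where
  "strongly_rectangular D rels \<longleftrightarrow> (\<forall>\<phi> vs. pp \<phi> \<and> distinct vs \<and> fv \<phi> \<subseteq> set vs \<and> length vs \<ge> 2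
      \<longrightarrow> rectangular (length vs) (defrel D rels \<phi> vs))"

definition strongly_2_rectangular :: "nat set \<Rightarrow> nat list set list \<Rightarrow> bool" where
  "strongly_2_rectangular D rels \<longleftrightarrow> (\<forall>\<phi> vs. mod2fm \<phi> \<and> distinct vs \<and> fv \<phi> \<subseteq> set vs \<and> length vs \<ge> 2
      \<longrightarrow> rectangular (length vs) (defrel D rels \<phi> vs))"

end

theory Submission
  imports Defs
begin

definition pi1 :: "nat \<Rightarrow> nat" where "pi1 z = (if z \<le> 1 then 0 else 1)"
definition pi2 :: "nat \<Rightarrow> nat" where "pi2 z = (if z = 1 \<or> z = 4 then 1 else 0)"
definition fib :: "nat \<Rightarrow> nat \<Rightarrow> nat" where
  "fib x y = (if x = 0 then y else if y = 0 then 2 else 4)"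
definition mf :: "nat \<Rightarrow> nat \<Rightarrow> nat \<Rightarrow> nat" where
  "mf a b c = (if a = b then c else if b = c then a else
     fib ((pi1 a + pi1 b + pi1 c) mod 2) ((pi2 a + pi2 b + pi2 c) mod 2))"

lemma A: "t \<in> Rrel \<Longrightarrow> t = [0,0,0] \<or> t = [0,1,1] \<or> t = [1,0,2] \<or> t = [1,0,3] \<or> t = [1,1,4]"
  unfolding Rrel_def by simp
lemma B: "pi1 0 = 0" "pi1 1 = 0" "pi1 2 = 1" "pi1 3 = 1" "pi1 4 = 1"
   "pi2 0 = 0" "pi2 1 = 1" "pi2 2 = 0" "pi2 3 = 0" "pi2 4 = 1" "pi1 (Suc 0) = 0" "pi2 (Suc 0) = 1"
  by (simp_all add: pi1_def pi2_def)
lemma Rchar: "Rrel = {[pi1 z, pi2 z, z] | z. z \<in> {0,1,2,3,4}}"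
proof
  show "Rrel \<subseteq> {[pi1 z, pi2 z, z] | z. z \<in> {0,1,2,3,4}}"
  proof
    fix t assume "t \<in> Rrel"
    then have "t = [pi1 0, pi2 0, 0] \<or> t = [pi1 1, pi2 1, 1] \<or> t = [pi1 2, pi2 2, 2] \<or>
      t = [pi1 3, pi2 3, 3] \<or> t = [pi1 4, pi2 4, 4]"
      using A by (simp only: B)
    then show "t \<in> {[pi1 z, pi2 z, z] | z. z \<in> {0,1,2,3,4}}" by blast
  qed
next
  show "{[pi1 z, pi2 z, z] | z. z \<in> {0,1,2,3,4}} \<subseteq> Rrel"
  proof
    fix t assume "t \<in> {[pi1 z, pi2 z, z] | z. z \<in> {0,1,2,3,4::nat}}"
    then obtain z where "t = [pi1 z, pi2 z, z]" "z \<in> {0,1,2,3,4::nat}" by blast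
    then show "t \<in> Rrel"
      by (elim insertE emptyE; simp add: Rrel_def B)
  qed
qed
lemma pis0: "list_all (\<lambda>z1. list_all (\<lambda>z2. list_all (\<lambda>z3.
  pi1 (mf z1 z2 z3) = mf (pi1 z1) (pi1 z2) (pi1 z3) \<and> pi2 (mf z1 z2 z3) = mf (pi2 z1) (pi2 z2) (pi2 z3)
  \<and> mf z1 z2 z3 < 5) [0,1,2,3,4::nat]) [0,1,2,3,4::nat]) [0,1,2,3,4::nat]"
  unfolding mf_def pi1_def pi2_def fib_def by code_simp
lemma pis: "z1 \<in> {0,1,2,3,4::nat} \<Longrightarrow> z2 \<in> {0,1,2,3,4} \<Longrightarrow> z3 \<in> {0,1,2,3,4} \<Longrightarrow>
  pi1 (mf z1 z2 z3) = mf (pi1 z1) (pi1 z2) (pi1 z3) \<and> pi2 (mf z1 z2 z3) = mf (pi2 z1) (pi2 z2) (pi2 z3)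
  \<and> mf z1 z2 z3 \<in> {0,1,2,3,4}"
proof -
  assume z: "z1 \<in> {0,1,2,3,4::nat}" "z2 \<in> {0,1,2,3,4}" "z3 \<in> {0,1,2,3,4}"
  have "\<forall>z1\<in>{0,1,2,3,4::nat}. \<forall>z2\<in>{0,1,2,3,4::nat}. \<forall>z3\<in>{0,1,2,3,4::nat}.
    pi1 (mf z1 z2 z3) = mf (pi1 z1) (pi1 z2) (pi1 z3) \<and> pi2 (mf z1 z2 z3) = mf (pi2 z1) (pi2 z2) (pi2 z3)
    \<and> mf z1 z2 z3 < 5"
    using pis0 by (simp only: list_all_iff list.set)
  then have "pi1 (mf z1 z2 z3) = mf (pi1 z1) (pi1 z2) (pi1 z3) \<and> pi2 (mf z1 z2 z3) = mf (pi2 z1) (pi2 z2) (pi2 z3)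
    \<and> mf z1 z2 z3 < 5" using z by blast
  moreover have "\<And>x::nat. x < 5 \<Longrightarrow> x \<in> {0,1,2,3,4}" by auto
  ultimately show ?thesis by blast
qed
lemma mf_pres_R: "preserves3 Hdom mf Rrel"
  unfolding preserves3_def Rchar
proof (intro ballI impI)
  fix t1 t2 t3 assume "t1 \<in> {[pi1 z, pi2 z, z] | z. z \<in> {0,1,2,3,4::nat}}"
     "t2 \<in> {[pi1 z, pi2 z, z] | z. z \<in> {0,1,2,3,4::nat}}" "t3 \<in> {[pi1 z, pi2 z, z] | z. z \<in> {0,1,2,3,4::nat}}"
  then obtain z1 z2 z3 where z: "t1 = [pi1 z1, pi2 z1, z1]" "t2 = [pi1 z2, pi2 z2, z2]" "t3 = [pi1 z3, pi2 z3, z3]"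
    "z1 \<in> {0,1,2,3,4}" "z2 \<in> {0,1,2,3,4}" "z3 \<in> {0,1,2,3,4}" by blast
  have eq: "map (\<lambda>i. mf (t1 ! i) (t2 ! i) (t3 ! i)) [0..<length t1] = [pi1 (mf z1 z2 z3), pi2 (mf z1 z2 z3), mf z1 z2 z3]"
    using pis[OF z(4-6)] z by (simp add: upt_rec)
  show "map (\<lambda>i. mf (t1 ! i) (t2 ! i) (t3 ! i)) [0..<length t1] \<in> {[pi1 z, pi2 z, z] | z. z \<in> {0,1,2,3,4::nat}}"
    unfolding eq using pis[OF z(4-6)] by (intro CollectI exI[of _ "mf z1 z2 z3"]) simp
qed

lemma mf_pres_C: "preserves3 Hdom mf (Crel a)"
proof -
  have "mf a a a = a" by (simp add: mf_def)
  then show ?thesis unfolding preserves3_def Crel_def by simp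
qed

lemma mf_maltsev: "maltsev_polymorphism Hdom Hrels mf"
  unfolding maltsev_polymorphism_def
proof (intro conjI)
  show "\<forall>a\<in>Hdom. \<forall>b\<in>Hdom. \<forall>c\<in>Hdom. mf a b c \<in> Hdom"
    unfolding Hdom_def using pis by (intro ballI) (metis (no_types, lifting))
  show "\<forall>a\<in>Hdom. \<forall>b\<in>Hdom. mf a a b = b \<and> mf b a a = b"
    by (simp add: mf_def)
  show "\<forall>S\<in>set Hrels. preserves3 Hdom mf S"
    unfolding Hrels_def using mf_pres_R mf_pres_C by simp
qed

lemma pp_preserved:
  assumes M: "maltsev_polymorphism D rels f"
  shows "pp \<phi> \<Longrightarrow> (\<forall>v. s1 v \<in> D) \<Longrightarrow> (\<forall>v. s2 v \<in> D) \<Longrightarrow> (\<forall>v. s3 v \<in> D) \<Longrightarrow>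
    sat D rels s1 \<phi> \<Longrightarrow> sat D rels s2 \<phi> \<Longrightarrow> sat D rels s3 \<phi> \<Longrightarrow>
    sat D rels (\<lambda>v. f (s1 v) (s2 v) (s3 v)) \<phi>"
proof (induction \<phi> arbitrary: s1 s2 s3)
  case (Atom k vs)
  then have k: "k < length rels" and in1: "map s1 vs \<in> rels ! k"
    and in2: "map s2 vs \<in> rels ! k" and in3: "map s3 vs \<in> rels ! k" by auto
  have P: "preserves3 D f (rels ! k)" using M k unfolding maltsev_polymorphism_def by auto
  have "map (\<lambda>i. f (map s1 vs!i) (map s2 vs!i) (map s3 vs!i)) [0..<length (map s1 vs)] \<in> rels ! k"
    using P[unfolded preserves3_def, rule_format, OF in1 in2 in3] by simp
  moreover have "map (\<lambda>i. f (map s1 vs!i) (map s2 vs!i) (map s3 vs!i)) [0..<length (map s1 vs)]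
     = map (\<lambda>v. f (s1 v) (s2 v) (s3 v)) vs"
    by (rule nth_equalityI) auto
  ultimately show ?case using k by simp
next
  case (Eq x y) then show ?case by simp
next
  case (Conj \<phi>1 \<phi>2) then show ?case by simp
next
  case (Ex x \<phi>)
  from Ex.prems obtain a1 a2 a3 where a: "a1 \<in> D" "a2 \<in> D" "a3 \<in> D"
    and s: "sat D rels (s1(x:=a1)) \<phi>" "sat D rels (s2(x:=a2)) \<phi>" "sat D rels (s3(x:=a3)) \<phi>"
    by auto
  have fa: "f a1 a2 a3 \<in> D" using M a unfolding maltsev_polymorphism_def by auto
  have "sat D rels (\<lambda>v. f ((s1(x:=a1)) v) ((s2(x:=a2)) v) ((s3(x:=a3)) v)) \<phi>"
  proof -
    have pp: "pp \<phi>" using Ex.prems by simp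
    have d1: "\<forall>v. (s1(x:=a1)) v \<in> D" using Ex.prems a by auto
    have d2: "\<forall>v. (s2(x:=a2)) v \<in> D" using Ex.prems a by auto
    have d3: "\<forall>v. (s3(x:=a3)) v \<in> D" using Ex.prems a by auto
    show ?thesis by (rule Ex.IH[OF pp d1 d2 d3 s(1) s(2) s(3)])
  qed
  moreover have "(\<lambda>v. f ((s1(x:=a1)) v) ((s2(x:=a2)) v) ((s3(x:=a3)) v))
      = (\<lambda>v. f (s1 v) (s2 v) (s3 v))(x := f a1 a2 a3)" by auto
  ultimately show ?case using fa by auto
next
  case (ExPar x \<phi>) then show ?case by simp
qed

lemma maltsev_strongly_rect:
  assumes M: "maltsev_polymorphism D rels f"
  shows "strongly_rectangular D rels"
  unfolding strongly_rectangular_def rectangular_def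
proof (intro allI impI, elim conjE)
  fix \<phi> vs I a b c d
  assume pp: "pp \<phi>" and I: "I \<subseteq> {..<length vs}"
    and l: "length a = length vs" "length b = length vs" "length c = length vs" "length d = length vs"
    and m1: "mix I (length vs) a c \<in> defrel D rels \<phi> vs"
    and m2: "mix I (length vs) a d \<in> defrel D rels \<phi> vs"
    and m3: "mix I (length vs) b c \<in> defrel D rels \<phi> vs"
  let ?n = "length vs"
  obtain s1 where s1: "\<forall>v. s1 v \<in> D" "sat D rels s1 \<phi>" "mix I ?n a c = map s1 vs"
    using m1 unfolding defrel_def by auto
  obtain s2 where s2: "\<forall>v. s2 v \<in> D" "sat D rels s2 \<phi>" "mix I ?n a d = map s2 vs"
    using m2 unfolding defrel_def by auto
  obtain s3 where s3: "\<forall>v. s3 v \<in> D" "sat D rels s3 \<phi>" "mix I ?n b c = map s3 vs"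
    using m3 unfolding defrel_def by auto
  define s where "s = (\<lambda>v. f (s3 v) (s1 v) (s2 v))"
  have sD: "\<forall>v. s v \<in> D" using M s1 s2 s3 unfolding s_def maltsev_polymorphism_def by auto
  have ss: "sat D rels s \<phi>" unfolding s_def
    by (rule pp_preserved[OF M pp]) (use s1 s2 s3 in auto)
  have "mix I ?n b d = map s vs"
  proof (rule nth_equalityI)
    show "length (mix I ?n b d) = length (map s vs)" by (simp add: mix_def)
  next
    fix i assume "i < length (mix I ?n b d)"
    then have i: "i < ?n" by (simp add: mix_def)
    have e1: "s1 (vs!i) = (if i \<in> I then a!i else c!i)"
    proof -
      have "mix I ?n a c ! i = (if i \<in> I then a!i else c!i)" using i by (simp add: mix_def)
      then show ?thesis using arg_cong[OF s1(3), of "\<lambda>l. l!i"] i by simp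
    qed
    have e2: "s2 (vs!i) = (if i \<in> I then a!i else d!i)"
    proof -
      have "mix I ?n a d ! i = (if i \<in> I then a!i else d!i)" using i by (simp add: mix_def)
      then show ?thesis using arg_cong[OF s2(3), of "\<lambda>l. l!i"] i by simp
    qed
    have e3: "s3 (vs!i) = (if i \<in> I then b!i else c!i)"
    proof -
      have "mix I ?n b c ! i = (if i \<in> I then b!i else c!i)" using i by (simp add: mix_def)
      then show ?thesis using arg_cong[OF s3(3), of "\<lambda>l. l!i"] i by simp
    qed
    have D1: "s1 (vs!i) \<in> D" "s2 (vs!i) \<in> D" "s3 (vs!i) \<in> D" using s1 s2 s3 by auto
    show "mix I ?n b d ! i = map s vs ! i"
      using i e1 e2 e3 D1 M unfolding maltsev_polymorphism_def s_def mix_def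
      by (auto split: if_splits)
  qed
  then show "mix I ?n b d \<in> defrel D rels \<phi> vs"
    unfolding defrel_def using sD ss by blast
qed

lemma two_rigid_H: "two_rigid Hdom Hrels"
  unfolding two_rigid_def
proof
  assume "\<exists>g. automorphism Hdom Hrels g \<and> (\<forall>x\<in>Hdom. g (g x) = x) \<and> (\<exists>x\<in>Hdom. g x \<noteq> x)"
  then obtain g x where A: "automorphism Hdom Hrels g" and x: "x \<in> Hdom" "g x \<noteq> x" by blast
  have "Crel x \<in> set Hrels" using x by (auto simp: Hdom_def Hrels_def)
  moreover have "[x] \<in> lists Hdom" using x by auto
  ultimately have "[x] \<in> Crel x \<longleftrightarrow> map g [x] \<in> Crel x"
    using A unfolding automorphism_def by blast
  then show False using x by (simp add: Crel_def)
qed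

lemma Rfib: "{a \<in> Hdom. [x,y,a] \<in> Rrel} =
  (if x = 0 \<and> y = 0 then {0} else if x = 0 \<and> y = 1 then {1} else
   if x = 1 \<and> y = 0 then {2,3} else if x = 1 \<and> y = 1 then {4} else {})"
  unfolding Hdom_def Rrel_def by auto

lemma sat_phi:
  "sat Hdom Hrels s (ExPar 2 (Atom 0 [0, 1, 2])) \<longleftrightarrow> [s 0, s 1] \<in> {[0,0],[0,1],[1,1]}"
proof -
  have "sat Hdom Hrels s (ExPar 2 (Atom 0 [0, 1, 2])) \<longleftrightarrow>
     odd (card {a \<in> Hdom. [s 0, s 1, a] \<in> Rrel})"
    by (simp add: Hrels_def)
  also have "\<dots> \<longleftrightarrow> [s 0, s 1] \<in> {[0,0],[0,1],[1,1]}"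
    unfolding Rfib by auto
  finally show ?thesis .
qed

lemma defrel_phi: "defrel Hdom Hrels (ExPar 2 (Atom 0 [0, 1, 2])) [0, 1] = {[0,0],[0,1],[1,1]}"
proof
  show "defrel Hdom Hrels (ExPar 2 (Atom 0 [0, 1, 2])) [0, 1] \<subseteq> {[0,0],[0,1],[1,1]}"
  proof
    fix t assume "t \<in> defrel Hdom Hrels (ExPar 2 (Atom 0 [0, 1, 2])) [0, 1]"
    then obtain s where "t = map s [0,1]" "sat Hdom Hrels s (ExPar 2 (Atom 0 [0, 1, 2]))"
      unfolding defrel_def by blast
    then have "t = [s 0, s 1]" "[s 0, s 1] \<in> {[0,0],[0,1],[1,1]}" using sat_phi by simp_all
    then show "t \<in> {[0,0],[0,1],[1,1]}" by simp
  qed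
next
  show "{[0,0],[0,1],[1,1]} \<subseteq> defrel Hdom Hrels (ExPar 2 (Atom 0 [0, 1, 2])) [0, 1]"
  proof
    fix t :: "nat list" assume t: "t \<in> {[0,0],[0,1],[1,1]}"
    then obtain x y where xy: "t = [x,y]" "x \<in> {0,1}" "y \<in> {0,1}"
      by blast
    define s where "s = (\<lambda>v::nat. if v = 0 then x else if v = 1 then y else 0::nat)"
    have sD: "\<forall>v. s v \<in> Hdom" using xy(2,3) by (auto simp: s_def Hdom_def)
    have "[s 0, s 1] = t" using xy by (simp add: s_def)
    then have "sat Hdom Hrels s (ExPar 2 (Atom 0 [0, 1, 2]))"
      using sat_phi[of s] t by simp
    moreover have "t = map s [0,1]" using xy by (simp add: s_def)
    ultimately show "t \<in> defrel Hdom Hrels (ExPar 2 (Atom 0 [0, 1, 2])) [0, 1]"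
      unfolding defrel_def using sD by blast
  qed
qed

lemma l1: "{0::nat} \<subseteq> {..<2} \<and> {0::nat} \<noteq> {} \<and> {0::nat} \<noteq> {..<2}"
proof -
  have a: "{0::nat} \<subseteq> {..<2}" by simp
  have b: "{0::nat} \<noteq> {..<2}"
  proof
    assume "{0::nat} = {..<2}"
    moreover have "(1::nat) \<in> {..<2}" by simp
    ultimately have "(1::nat) \<in> {0}" by simp
    then show False by simp
  qed
  show ?thesis using a b by simp
qed
lemma m: "mix {0} 2 u v = [u!0, v!1]" for u v :: "nat list"
    by (simp add: mix_def numeral_2_eq_2)

lemma not_rect: "\<not> rectangular 2 {[0,0],[0,1],[1,1]}"
proof
  assume "rectangular 2 {[0,0],[0,1],[1,1]}"
  have R: "\<forall>a b c d. length a = 2 \<and> length b = 2 \<and> length c = 2 \<and> length d = 2 \<and>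
        mix {0} 2 a c \<in> {[0,0],[0,1],[1,1]} \<and> mix {0} 2 a d \<in> {[0,0],[0,1],[1,1]}
        \<and> mix {0} 2 b c \<in> {[0,0],[0,1],[1,1]} \<longrightarrow> mix {0} 2 b d \<in> {[0,0],[0,1],[1,1]}"
  proof -
    from l1 show ?thesis using spec[OF \<open>rectangular 2 {[0,0],[0,1],[1,1]}\<close>[unfolded rectangular_def], of "{0}"]
      by (rule mp[rotated])
  qed
  have m: "mix {0} 2 u v = [u!0, v!1]" for u v :: "nat list"
    by (simp add: mix_def numeral_2_eq_2)
  have "mix {0} 2 [1,0] [0,0] \<in> {[0,0],[0,1],[1,1]}"
    using R[rule_format, of "[0,0]" "[1,0]" "[0,1]" "[0,0]"] unfolding m by simp
  then show False unfolding m by simp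
qed

theorem mainTheorem14:
  shows "two_rigid Hdom Hrels
    \<and> (\<exists>f. maltsev_polymorphism Hdom Hrels f)
    \<and> strongly_rectangular Hdom Hrels
    \<and> \<not> strongly_2_rectangular Hdom Hrels
    \<and> defrel Hdom Hrels (ExPar 2 (Atom 0 [0, 1, 2])) [0, 1] = {[0,0],[0,1],[1,1]}
    \<and> \<not> rectangular 2 (defrel Hdom Hrels (ExPar 2 (Atom 0 [0, 1, 2])) [0, 1])"
proof -
  have n2: "\<not> strongly_2_rectangular Hdom Hrels"
  proof
    assume S: "strongly_2_rectangular Hdom Hrels"
    have c: "mod2fm (ExPar 2 (Atom 0 [0, 1, 2])) \<and> distinct [0::nat, 1] \<and>
      fv (ExPar 2 (Atom 0 [0, 1, 2])) \<subseteq> set [0::nat, 1] \<and> length [0::nat, 1] \<ge> 2" by auto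
    have "rectangular (length [0::nat, 1]) (defrel Hdom Hrels (ExPar 2 (Atom 0 [0, 1, 2])) [0, 1])"
      using S c unfolding strongly_2_rectangular_def by blast
    then have "rectangular 2 {[0,0],[0,1],[1,1]}" unfolding defrel_phi by (simp add: numeral_2_eq_2)
    then show False using not_rect by blast
  qed
  have m: "\<exists>f. maltsev_polymorphism Hdom Hrels f" using mf_maltsev by blast
  have nr: "\<not> rectangular 2 (defrel Hdom Hrels (ExPar 2 (Atom 0 [0, 1, 2])) [0, 1])"
    unfolding defrel_phi by (rule not_rect)
  show ?thesis using two_rigid_H m maltsev_strongly_rect[OF mf_maltsev] n2 defrel_phi nr
    by blast
qed

end
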